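(* Let $X_0\neq\{0\}$ be a Banach space, $\{\Theta_s,|||\cdot|||_s\}_{s\in\mathbb N_0}$ a sequence of $BK$-spaces satisfying (F1)–(F3), and $\{g_i\}_{i=1}^\infty\in(X_0^* )^{\mathbb N}$ a $\Theta_0$-frame for $X_0$ with bounds $1\le A_0\le B_0<\infty$. Let $M:=\{\{g_i(f)\}_{i=1}^\infty: f\in X_0\}\cap\Theta_F$ and assume that for every $s\in\mathbb N_0$ the set $\{\{g_i(f)\}_{i=1}^\infty:f\in X_0\}\cap\Theta_s$ is not $\{0\}$ and $M$ is dense in it with respect to $|||\cdot|||_s$. Then there exists a sequence of Banach spaces $\{X_s\}_{s\in\mathbb N_0}$ (starting with the given $X_0$) satisfying (F1)–(F3) such that $\{g_i|_{X_F}\}_{i=1}^\infty$ is a pre-$F$-frame for $X_F$ with respect to $\Theta_F$ with bounds $A_0,B_0$ for $s=0$ and $A_s=B_s=1$ for $s\in\mathbb N$. (Namely $X_s=\{f\in X_0:\{g_i(f)\}\in\Theta_s\}$ with $\|f\|_s=|||\{g_i(f)\}|||_s$, $s\ge1$.) If moreover there exists an $F$-bounded projection from $\Theta_F$ onto $M$, then $\{g_i|_{X_F}\}$ is an $F$-frame for $X_F$ with respect to $\Theta_F$.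
   Context: Conditions (F1)–(F3) for a sequence $\{Y_s,|\cdot|_s\}_{s\in\mathbb N_0}$ of separable Banach spaces: (F1) $\{0\}\neq\bigcap_sY_s\subseteq\dots\subseteq Y_1\subseteq Y_0$; (F2) $|\cdot|_0\le|\cdot|_1\le\dots$; (F3) $Y_F:=\bigcap_sY_s$ dense in each $Y_s$. $X_F=\bigcap_sX_s$, $\Theta_F=\bigcap_s\Theta_s$. $BK$-space: Banach sequence space with continuous coordinate functionals. For a Banach space $X$ and $BK$-space $\Theta$, $\{g_i\}\subset X^*$ is a $\Theta$-frame with bounds $A,B$ if $\{g_i(f)\}\in\Theta$ and $A\|f\|\le|||\{g_i(f)\}|||\le B\|f\|$ for all $f\in X$. Pre-$F$-frame: $\{g_i\}\in(X_F^* )^{\mathbb N}$ with $\{g_i(f)\}\in\Theta_F$ for all $f\in X_F$ and for each $s$ constants $0<A_s\le B_s$ with $A_s\|f\|_s\le|||\{g_i(f)\}|||_s\le B_s\|f\|_s$, $f\in X_F$. $F$-frame: pre-$F$-frame with an $F$-bounded $V:\Theta_F\to X_F$, $V(\{g_i(f)\})=f$ for $f\in X_F$. An operator is $F$-bounded if for each $s$ there is $K_s$ with $|\,Tc\,|_s\le K_s|||c|||_s$ in the respective $s$-th norms; a projection is a linear map $\mathcal P$ with $\mathcal P^2=\mathcal P$. *)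

theory Defs
  imports "HOL-Analysis.Analysis" "HOL-Library.Function_Algebras"
begin

instantiation "fun" :: (type, real_vector) real_vector
begin
definition scaleR_fun :: "real \<Rightarrow> ('a \<Rightarrow> 'b) \<Rightarrow> 'a \<Rightarrow> 'b" where
  "scaleR_fun c f = (\<lambda>x. c *\<^sub>R f x)"
instance by standard (auto simp: scaleR_fun_def fun_eq_iff scaleR_add_right scaleR_add_left)
end

definition normed_subspace :: "'v::real_vector set \<Rightarrow> ('v \<Rightarrow> real) \<Rightarrow> bool" where
  "normed_subspace S n \<longleftrightarrow>
     0 \<in> S \<and> (\<forall>x\<in>S. \<forall>y\<in>S. x + y \<in> S) \<and> (\<forall>c x. x \<in> S \<longrightarrow> c *\<^sub>R x \<in> S) \<and>
     (\<forall>x\<in>S. 0 \<le> n x) \<and> (\<forall>x\<in>S. n x = 0 \<longleftrightarrow> x = 0) \<and>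
     (\<forall>x\<in>S. \<forall>y\<in>S. n (x + y) \<le> n x + n y) \<and>
     (\<forall>c. \<forall>x\<in>S. n (c *\<^sub>R x) = \<bar>c\<bar> * n x)"

definition complete_wrt :: "'v::real_vector set \<Rightarrow> ('v \<Rightarrow> real) \<Rightarrow> bool" where
  "complete_wrt S n \<longleftrightarrow>
     (\<forall>u. (\<forall>k. u k \<in> S) \<and> (\<forall>e>0. \<exists>N. \<forall>k\<ge>N. \<forall>l\<ge>N. n (u k - u l) < e)
        \<longrightarrow> (\<exists>x\<in>S. (\<lambda>k. n (u k - x)) \<longlonglongrightarrow> 0))"

definition dense_wrt :: "'v::real_vector set \<Rightarrow> ('v \<Rightarrow> real) \<Rightarrow> 'v set \<Rightarrow> bool" where
  "dense_wrt S n D \<longleftrightarrow> (\<forall>x\<in>S. \<forall>e>0. \<exists>d\<in>D. n (x - d) < e)"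

definition separable_wrt :: "'v::real_vector set \<Rightarrow> ('v \<Rightarrow> real) \<Rightarrow> bool" where
  "separable_wrt S n \<longleftrightarrow> (\<exists>D. D \<subseteq> S \<and> countable D \<and> dense_wrt S n D)"

definition banach_space_on :: "'v::real_vector set \<Rightarrow> ('v \<Rightarrow> real) \<Rightarrow> bool" where
  "banach_space_on S n \<longleftrightarrow> normed_subspace S n \<and> complete_wrt S n"

definition BK_space :: "(nat \<Rightarrow> real) set \<Rightarrow> ((nat \<Rightarrow> real) \<Rightarrow> real) \<Rightarrow> bool" where
  "BK_space \<Theta> n \<longleftrightarrow> banach_space_on \<Theta> n \<and> (\<forall>i. \<exists>C. \<forall>c\<in>\<Theta>. \<bar>c i\<bar> \<le> C * n c)"

definition F_conditions :: "(nat \<Rightarrow> 'v::real_vector set) \<Rightarrow> (nat \<Rightarrow> 'v \<Rightarrow> real) \<Rightarrow> bool" where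
  "F_conditions Y nY \<longleftrightarrow>
     (\<forall>s. banach_space_on (Y s) (nY s) \<and> separable_wrt (Y s) (nY s)) \<and>
     (\<Inter>s. Y s) \<noteq> {0} \<and> (\<forall>s. Y (Suc s) \<subseteq> Y s) \<and>
     (\<forall>s. \<forall>x\<in>Y (Suc s). nY s x \<le> nY (Suc s) x) \<and>
     (\<forall>s. dense_wrt (Y s) (nY s) (\<Inter>s. Y s))"

definition linear_on :: "'v::real_vector set \<Rightarrow> ('v \<Rightarrow> 'w::real_vector) \<Rightarrow> bool" where
  "linear_on S T \<longleftrightarrow> (\<forall>x\<in>S. \<forall>y\<in>S. T (x + y) = T x + T y) \<and> (\<forall>c. \<forall>x\<in>S. T (c *\<^sub>R x) = c *\<^sub>R T x)"

definition F_bounded :: "(nat \<Rightarrow> 'v::real_vector set) \<Rightarrow> (nat \<Rightarrow> 'v \<Rightarrow> real)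
     \<Rightarrow> (nat \<Rightarrow> 'w \<Rightarrow> real) \<Rightarrow> ('v \<Rightarrow> 'w) \<Rightarrow> bool" where
  "F_bounded Y nY nZ T \<longleftrightarrow> (\<forall>s. \<exists>K. \<forall>c\<in>(\<Inter>t. Y t). nZ s (T c) \<le> K * nY s c)"

text \<open>Element of X_F^*: linear on X_F and continuous w.r.t. the Frechet topology of X_F.\<close>
definition F_dual :: "(nat \<Rightarrow> 'a::real_vector set) \<Rightarrow> (nat \<Rightarrow> 'a \<Rightarrow> real) \<Rightarrow> ('a \<Rightarrow> real) \<Rightarrow> bool" where
  "F_dual X nX h \<longleftrightarrow> linear_on (\<Inter>s. X s) h \<and>
     (\<exists>s C. \<forall>f\<in>(\<Inter>t. X t). \<bar>h f\<bar> \<le> C * nX s f)"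

definition pre_F_frame :: "(nat \<Rightarrow> 'a::real_vector set) \<Rightarrow> (nat \<Rightarrow> 'a \<Rightarrow> real)
   \<Rightarrow> (nat \<Rightarrow> (nat \<Rightarrow> real) set) \<Rightarrow> (nat \<Rightarrow> (nat \<Rightarrow> real) \<Rightarrow> real)
   \<Rightarrow> (nat \<Rightarrow> 'a \<Rightarrow> real) \<Rightarrow> (nat \<Rightarrow> real) \<Rightarrow> (nat \<Rightarrow> real) \<Rightarrow> bool" where
  "pre_F_frame X nX \<Theta> n\<Theta> g A B \<longleftrightarrow>
     (\<forall>i. F_dual X nX (g i)) \<and>
     (\<forall>f\<in>(\<Inter>s. X s). (\<lambda>i. g i f) \<in> (\<Inter>s. \<Theta> s)) \<and>
     (\<forall>s. 0 < A s \<and> A s \<le> B s \<and>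
        (\<forall>f\<in>(\<Inter>t. X t). A s * nX s f \<le> n\<Theta> s (\<lambda>i. g i f) \<and> n\<Theta> s (\<lambda>i. g i f) \<le> B s * nX s f))"

definition F_frame :: "(nat \<Rightarrow> 'a::real_vector set) \<Rightarrow> (nat \<Rightarrow> 'a \<Rightarrow> real)
   \<Rightarrow> (nat \<Rightarrow> (nat \<Rightarrow> real) set) \<Rightarrow> (nat \<Rightarrow> (nat \<Rightarrow> real) \<Rightarrow> real)
   \<Rightarrow> (nat \<Rightarrow> 'a \<Rightarrow> real) \<Rightarrow> bool" where
  "F_frame X nX \<Theta> n\<Theta> g \<longleftrightarrow>
     (\<exists>A B. pre_F_frame X nX \<Theta> n\<Theta> g A B) \<and>
     (\<exists>V. (\<forall>c\<in>(\<Inter>s. \<Theta> s). V c \<in> (\<Inter>s. X s)) \<and> linear_on (\<Inter>s. \<Theta> s) V \<and>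
          F_bounded \<Theta> n\<Theta> nX V \<and> (\<forall>f\<in>(\<Inter>s. X s). V (\<lambda>i. g i f) = f))"

definition Theta_frame :: "(nat \<Rightarrow> real) set \<Rightarrow> ((nat \<Rightarrow> real) \<Rightarrow> real)
   \<Rightarrow> (nat \<Rightarrow> 'a::real_normed_vector \<Rightarrow> real) \<Rightarrow> real \<Rightarrow> real \<Rightarrow> bool" where
  "Theta_frame \<Theta> n g A B \<longleftrightarrow> (\<forall>i. bounded_linear (g i)) \<and>
     (\<forall>f. (\<lambda>i. g i f) \<in> \<Theta> \<and> A * norm f \<le> n (\<lambda>i. g i f) \<and> n (\<lambda>i. g i f) \<le> B * norm f)"

end

theory Submission
  imports Defs
begin


lemma ns_nonneg: "normed_subspace S n \<Longrightarrow> x \<in> S \<Longrightarrow> 0 \<le> n x"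
  unfolding normed_subspace_def by simp
lemma ns_eq0: "normed_subspace S n \<Longrightarrow> x \<in> S \<Longrightarrow> n x = 0 \<Longrightarrow> x = 0"
  unfolding normed_subspace_def by simp
lemma ns_add: "normed_subspace S n \<Longrightarrow> x \<in> S \<Longrightarrow> y \<in> S \<Longrightarrow> x + y \<in> S"
  unfolding normed_subspace_def by simp
lemma ns_scale: "normed_subspace S n \<Longrightarrow> x \<in> S \<Longrightarrow> c *\<^sub>R x \<in> S"
  unfolding normed_subspace_def by simp
lemma ns_tri2: "normed_subspace S n \<Longrightarrow> x \<in> S \<Longrightarrow> y \<in> S \<Longrightarrow> n (x + y) \<le> n x + n y"
  unfolding normed_subspace_def by simp
lemma ns_hom: "normed_subspace S n \<Longrightarrow> x \<in> S \<Longrightarrow> n (c *\<^sub>R x) = \<bar>c\<bar> * n x"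
  unfolding normed_subspace_def by simp

lemma ns_zero: "normed_subspace S n \<Longrightarrow> n 0 = 0"
  unfolding normed_subspace_def by (metis scaleR_zero_left abs_zero mult_zero_left)

lemma ns_uminus: assumes "normed_subspace S n" "x \<in> S" shows "-x \<in> S" "n (-x) = n x"
proof -
  have "-x = (-1) *\<^sub>R x" by simp
  then show "-x \<in> S" "n (-x) = n x" using assms unfolding normed_subspace_def by (metis abs_neg_one mult_1)+
qed

lemma ns_diff: assumes "normed_subspace S n" "x \<in> S" "y \<in> S" shows "x - y \<in> S"
  using assms ns_uminus[OF assms(1) assms(3)] unfolding normed_subspace_def
  by (metis diff_conv_add_uminus)

lemma ns_sym: assumes "normed_subspace S n" "x \<in> S" "y \<in> S" shows "n (x - y) = n (y - x)"
  using ns_uminus(2)[OF assms(1) ns_diff[OF assms]] by (metis minus_diff_eq)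

lemma ns_tri: assumes "normed_subspace S n" "x \<in> S" "y \<in> S" "z \<in> S"
  shows "n (x - z) \<le> n (x - y) + n (y - z)"
proof -
  have "x - z = (x - y) + (y - z)" by simp
  then show ?thesis using assms ns_diff[OF assms(1)] unfolding normed_subspace_def by metis
qed

lemma sep_sub:
  assumes ns: "normed_subspace S n" and sep: "separable_wrt S n" and T: "T \<subseteq> S"
  shows "\<exists>D\<subseteq>T. countable D \<and> dense_wrt T n D"
proof -
  obtain D where D: "D \<subseteq> S" "countable D" "dense_wrt S n D" using sep unfolding separable_wrt_def by blast
  define ch where "ch = (\<lambda>(d,k::nat). SOME t. t \<in> T \<and> n (d - t) < 1 / Suc k)"
  define E where "E = {(d,k). d \<in> D \<and> (\<exists>t\<in>T. n (d - t) < 1 / Suc k)}"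
  have chT: "ch p \<in> T \<and> n (fst p - ch p) < 1 / Suc (snd p)" if "p \<in> E" for p
    using that unfolding E_def ch_def by (auto intro: someI2_ex)
  have cE: "countable E"
  proof (rule countable_subset)
    show "E \<subseteq> D \<times> UNIV" unfolding E_def by auto
    show "countable (D \<times> (UNIV::nat set))" using D(2) by simp
  qed
  show ?thesis
  proof (intro exI conjI)
    show "ch ` E \<subseteq> T" using chT by auto
    show "countable (ch ` E)" using cE by simp
    show "dense_wrt T n (ch ` E)" unfolding dense_wrt_def
    proof (intro ballI allI impI)
      fix x e assume x: "x \<in> T" and e: "(0::real) < e"
      obtain k::nat where k: "1 / Suc k < e / 2"
        by (metis e half_gt_zero_iff nat_approx_posE of_nat_Suc)
      have kp: "0 < 1 / real (Suc k)" by simp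
      obtain d where d: "d \<in> D" "n (x - d) < 1 / Suc k" using D(3) x T kp unfolding dense_wrt_def by blast
      have "n (d - x) < 1 / Suc k" using ns_sym[OF ns, of x d] d x T D(1) by (metis subsetD)
      hence "(d,k) \<in> E" using d x unfolding E_def by auto
      from chT[OF this] have c: "ch (d,k) \<in> T" "n (d - ch (d,k)) < 1 / Suc k" by auto
      have "n (x - ch (d,k)) \<le> n (x - d) + n (d - ch (d,k))"
        using ns_tri[OF ns, of x d "ch (d,k)"] x T c D(1) d by auto
      also have "\<dots> < e" using d c k by linarith
      finally show "\<exists>t\<in>ch ` E. n (x - t) < e" using \<open>(d,k)\<in>E\<close> by blast
    qed
  qed
qed

theorem theorem4p2:
  fixes g :: "nat \<Rightarrow> 'a::banach \<Rightarrow> real"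
    and \<Theta> :: "nat \<Rightarrow> (nat \<Rightarrow> real) set"
    and n\<Theta> :: "nat \<Rightarrow> (nat \<Rightarrow> real) \<Rightarrow> real"
    and A0 B0 :: real
  assumes X0_nontriv: "\<exists>x::'a. x \<noteq> 0"
    and BK: "\<forall>s. BK_space (\<Theta> s) (n\<Theta> s)"
    and F: "F_conditions \<Theta> n\<Theta>"
    and frame: "Theta_frame (\<Theta> 0) (n\<Theta> 0) g A0 B0"
    and bounds: "1 \<le> A0" "A0 \<le> B0"
    and nontriv: "\<forall>s. range (\<lambda>f. (\<lambda>i. g i f)) \<inter> \<Theta> s \<noteq> {0}"
    and dense: "\<forall>s. dense_wrt (range (\<lambda>f. (\<lambda>i. g i f)) \<inter> \<Theta> s) (n\<Theta> s)
                        (range (\<lambda>f. (\<lambda>i. g i f)) \<inter> (\<Inter>t. \<Theta> t))"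
  shows "\<exists>X nX. X 0 = UNIV \<and> nX 0 = norm \<and>
           (\<forall>s\<ge>1. X s = {f. (\<lambda>i. g i f) \<in> \<Theta> s} \<and> (\<forall>f\<in>X s. nX s f = n\<Theta> s (\<lambda>i. g i f))) \<and>
           F_conditions X nX \<and>
           pre_F_frame X nX \<Theta> n\<Theta> g (\<lambda>s. if s = 0 then A0 else 1) (\<lambda>s. if s = 0 then B0 else 1) \<and>
           ((\<exists>P. linear_on (\<Inter>s. \<Theta> s) P \<and>
                 P ` (\<Inter>s. \<Theta> s) = range (\<lambda>f. (\<lambda>i. g i f)) \<inter> (\<Inter>t. \<Theta> t) \<and>
                 (\<forall>c\<in>(\<Inter>s. \<Theta> s). P (P c) = P c) \<and>
                 F_bounded \<Theta> n\<Theta> n\<Theta> P)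
            \<longrightarrow> F_frame X nX \<Theta> n\<Theta> g)"
proof -
  define G where "G = (\<lambda>f. (\<lambda>i. g i f))"
  have bl: "\<And>i. bounded_linear (g i)" and fr: "\<And>f. G f \<in> \<Theta> 0 \<and> A0 * norm f \<le> n\<Theta> 0 (G f) \<and> n\<Theta> 0 (G f) \<le> B0 * norm f"
    using frame unfolding Theta_frame_def G_def by auto
  have Gadd: "G (f + h) = G f + G h" for f h
    unfolding G_def by (rule ext) (simp add: linear_add[OF bl[THEN bounded_linear.linear]])
  have Gscale: "G (c *\<^sub>R f) = c *\<^sub>R G f" for c f
    unfolding G_def by (rule ext) (simp add: linear_scale[OF bl[THEN bounded_linear.linear]] scaleR_fun_def)
  have Gdiff: "G (f - h) = G f - G h" for f h
    unfolding G_def by (rule ext) (simp add: linear_diff[OF bl[THEN bounded_linear.linear]])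
  have G0: "G 0 = 0" unfolding G_def by (rule ext) (simp add: linear_0[OF bl[THEN bounded_linear.linear]])
  have ns: "\<And>s. normed_subspace (\<Theta> s) (n\<Theta> s)" and cw: "\<And>s. complete_wrt (\<Theta> s) (n\<Theta> s)"
    using BK unfolding BK_space_def banach_space_on_def by auto
  have Fc: "\<And>s. separable_wrt (\<Theta> s) (n\<Theta> s)" "\<And>s. \<Theta> (Suc s) \<subseteq> \<Theta> s"
    "\<And>s x. x \<in> \<Theta> (Suc s) \<Longrightarrow> n\<Theta> s x \<le> n\<Theta> (Suc s) x"
    using F unfolding F_conditions_def by auto
  have mono: "\<Theta> s \<subseteq> \<Theta> 0 \<and> (\<forall>x\<in>\<Theta> s. n\<Theta> 0 x \<le> n\<Theta> s x)" for s
  proof (induction s)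
    case (Suc s) then show ?case using Fc(2)[of s] Fc(3)[where s=s] by force
  qed simp
  have A0p: "0 < A0" using bounds by simp
  have Ginj: "G f = G h \<Longrightarrow> f = h" for f h
  proof -
    assume "G f = G h"
    hence "G (f - h) = 0" by (simp add: Gdiff)
    hence "A0 * norm (f - h) \<le> 0" using fr[of "f - h"] ns_zero[OF ns] by simp
    thus "f = h" using A0p by (simp add: mult_le_0_iff)
  qed
  have nrm_le: "norm f \<le> n\<Theta> 0 (G f)" for f
  proof -
    have "norm f \<le> A0 * norm f" using bounds by (simp add: mult_le_cancel_right1)
    thus ?thesis using fr[of f] by linarith
  qed
  define X :: "nat \<Rightarrow> 'a set" where "X = (\<lambda>s. if s = 0 then UNIV else {f. G f \<in> \<Theta> s})"
  define nX :: "nat \<Rightarrow> 'a \<Rightarrow> real" where "nX = (\<lambda>s. if s = 0 then norm else (\<lambda>f. n\<Theta> s (G f)))"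
  have XG: "f \<in> X s \<longleftrightarrow> G f \<in> \<Theta> s" for f s
    using fr[of f] unfolding X_def by auto
  have XF: "f \<in> (\<Inter>s. X s) \<longleftrightarrow> G f \<in> (\<Inter>s. \<Theta> s)" for f using XG by auto
  have nsX: "normed_subspace (X s) (nX s)" for s
  proof (cases "s = 0")
    case True then show ?thesis unfolding normed_subspace_def X_def nX_def by (auto simp: norm_triangle_ineq)
  next
    case False
    have n: "normed_subspace (\<Theta> s) (n\<Theta> s)" by (rule ns)
    have e: "X s = {f. G f \<in> \<Theta> s}" "nX s = (\<lambda>f. n\<Theta> s (G f))" using False by (simp_all add: X_def nX_def)
    have z: "0 \<in> \<Theta> s" using n unfolding normed_subspace_def by simp
    have c1: "0 \<in> {f. G f \<in> \<Theta> s}" using z G0 by simp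
    have c2: "\<forall>x\<in>{f. G f \<in> \<Theta> s}. \<forall>y\<in>{f. G f \<in> \<Theta> s}. x + y \<in> {f. G f \<in> \<Theta> s}"
      using ns_add[OF n] by (simp add: Gadd)
    have c3: "\<forall>c x. x \<in> {f. G f \<in> \<Theta> s} \<longrightarrow> c *\<^sub>R x \<in> {f. G f \<in> \<Theta> s}"
      using ns_scale[OF n] by (simp add: Gscale)
    have c4: "\<forall>x\<in>{f. G f \<in> \<Theta> s}. 0 \<le> n\<Theta> s (G x)" using ns_nonneg[OF n] by simp
    have c5: "\<forall>x\<in>{f. G f \<in> \<Theta> s}. n\<Theta> s (G x) = 0 \<longleftrightarrow> x = 0"
    proof
      fix x assume "x \<in> {f. G f \<in> \<Theta> s}"
      hence x: "G x \<in> \<Theta> s" by simp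
      show "n\<Theta> s (G x) = 0 \<longleftrightarrow> x = 0"
      proof
        assume "n\<Theta> s (G x) = 0"
        hence "G x = G 0" using ns_eq0[OF n x] G0 by simp
        thus "x = 0" by (rule Ginj)
      qed (simp add: G0 ns_zero[OF n])
    qed
    have c6: "\<forall>x\<in>{f. G f \<in> \<Theta> s}. \<forall>y\<in>{f. G f \<in> \<Theta> s}. n\<Theta> s (G (x + y)) \<le> n\<Theta> s (G x) + n\<Theta> s (G y)"
      using ns_tri2[OF n] by (simp add: Gadd)
    have c7: "\<forall>c. \<forall>x\<in>{f. G f \<in> \<Theta> s}. n\<Theta> s (G (c *\<^sub>R x)) = \<bar>c\<bar> * n\<Theta> s (G x)"
      using ns_hom[OF n] by (simp add: Gscale)
    show ?thesis unfolding e normed_subspace_def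
      by (rule conjI[OF c1 conjI[OF c2 conjI[OF c3 conjI[OF c4 conjI[OF c5 conjI[OF c6 c7]]]]]])
  qed
  have nXle: "nX s h \<le> n\<Theta> s (G h)" for s h
    using nrm_le[of h] unfolding nX_def by auto
  have cwX: "complete_wrt (X s) (nX s)" for s
    unfolding complete_wrt_def
  proof (intro allI impI)
    fix u :: "nat \<Rightarrow> 'a"
    assume h: "(\<forall>k. u k \<in> X s) \<and> (\<forall>e>0. \<exists>N. \<forall>k\<ge>N. \<forall>l\<ge>N. nX s (u k - u l) < e)"
    show "\<exists>x\<in>X s. (\<lambda>k. nX s (u k - x)) \<longlonglongrightarrow> 0"
    proof (cases "s = 0")
      case True
      hence "Cauchy u" using h unfolding Cauchy_def nX_def by (simp add: dist_norm)
      then obtain x where "u \<longlonglongrightarrow> x" using Cauchy_convergent_iff convergent_def by blast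
      hence "(\<lambda>k. norm (u k - x)) \<longlonglongrightarrow> 0" using tendsto_norm_zero[OF LIM_zero] by blast
      thus ?thesis using True unfolding nX_def X_def by auto
    next
      case False
      have uk: "G (u k) \<in> \<Theta> s" for k using h XG by blast
      have "\<forall>e>0. \<exists>N. \<forall>k\<ge>N. \<forall>l\<ge>N. n\<Theta> s (G (u k) - G (u l)) < e"
        using h False unfolding nX_def by (simp add: Gdiff)
      hence pre: "(\<forall>k. G (u k) \<in> \<Theta> s) \<and> (\<forall>e>0. \<exists>N. \<forall>k\<ge>N. \<forall>l\<ge>N. n\<Theta> s (G (u k) - G (u l)) < e)"
        using uk by blast
      have cws: "\<forall>v. (\<forall>k. v k \<in> \<Theta> s) \<and> (\<forall>e>0. \<exists>N. \<forall>k\<ge>N. \<forall>l\<ge>N. n\<Theta> s (v k - v l) < e)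
        \<longrightarrow> (\<exists>x\<in>\<Theta> s. (\<lambda>k. n\<Theta> s (v k - x)) \<longlonglongrightarrow> 0)"
        using cw[of s] unfolding complete_wrt_def .
      have "\<exists>c\<in>\<Theta> s. (\<lambda>k. n\<Theta> s (G (u k) - c)) \<longlonglongrightarrow> 0"
        using mp[OF spec[OF cws, of "\<lambda>k. G (u k)"] pre] .
      then obtain c where c: "c \<in> \<Theta> s" "(\<lambda>k. n\<Theta> s (G (u k) - c)) \<longlonglongrightarrow> 0"
        by blast
      have le: "norm (u k - u l) \<le> n\<Theta> s (G (u k) - G (u l))" for k l
      proof -
        have "G (u k) - G (u l) \<in> \<Theta> s" using ns_diff[OF ns uk uk] .
        hence "n\<Theta> 0 (G (u k) - G (u l)) \<le> n\<Theta> s (G (u k) - G (u l))"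
          using bspec[OF conjunct2[OF mono[of s]]] by blast
        thus ?thesis using nrm_le[of "u k - u l"] unfolding Gdiff by linarith
      qed
      have "Cauchy u" unfolding Cauchy_def dist_norm
      proof (intro allI impI)
        fix e :: real assume "0 < e"
        then obtain N where N: "\<forall>k\<ge>N. \<forall>l\<ge>N. nX s (u k - u l) < e" using h by blast
        have "norm (u m - u n) < e" if "m \<ge> N" "n \<ge> N" for m n
        proof -
          have "nX s (u m - u n) = n\<Theta> s (G (u m) - G (u n))" using False by (simp add: nX_def Gdiff)
          thus ?thesis using le[of m n] N that by fastforce
        qed
        thus "\<exists>M. \<forall>m\<ge>M. \<forall>n\<ge>M. norm (u m - u n) < e" by blast
      qed
      then obtain f where f: "u \<longlonglongrightarrow> f" using Cauchy_convergent_iff convergent_def by blast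
      hence nf: "(\<lambda>k. B0 * norm (u k - f)) \<longlonglongrightarrow> 0"
        using tendsto_mult_right_zero[OF tendsto_norm_zero[OF LIM_zero[OF f]]] by simp
      have c0: "c \<in> \<Theta> 0" using c(1) mono[of s] by blast
      have bnd: "n\<Theta> 0 (c - G f) \<le> n\<Theta> s (G (u k) - c) + B0 * norm (u k - f)" for k
      proof -
        have uk0: "G (u k) \<in> \<Theta> 0" using uk mono[of s] by blast
        have "n\<Theta> 0 (c - G f) \<le> n\<Theta> 0 (c - G (u k)) + n\<Theta> 0 (G (u k) - G f)"
          using ns_tri[OF ns c0 uk0 conjunct1[OF fr[of f]]] .
        moreover have "n\<Theta> 0 (c - G (u k)) \<le> n\<Theta> s (G (u k) - c)"
          using bspec[OF conjunct2[OF mono[of s]] ns_diff[OF ns c(1) uk[of k]]] ns_sym[OF ns c(1) uk[of k]] by simp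
        moreover have "n\<Theta> 0 (G (u k) - G f) \<le> B0 * norm (u k - f)"
          using fr[of "u k - f"] by (simp add: Gdiff)
        ultimately show ?thesis by linarith
      qed
      have "n\<Theta> 0 (c - G f) \<le> 0"
        by (rule tendsto_le[OF trivial_limit_sequentially tendsto_add_zero[OF c(2) nf] tendsto_const])
           (use bnd in simp)
      moreover have cf: "c - G f \<in> \<Theta> 0" using ns_diff[OF ns c0 conjunct1[OF fr[of f]]] .
      ultimately have "c - G f = 0"
        using ns_nonneg[OF ns cf] ns_eq0[OF ns cf] by linarith
      hence cG: "c = G f" by simp
      show ?thesis
      proof (intro bexI)
        show "f \<in> X s" using XG[of f s] cG c(1) by simp
        show "(\<lambda>k. nX s (u k - f)) \<longlonglongrightarrow> 0" using c(2) False cG unfolding nX_def by (simp add: Gdiff)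
      qed
    qed
  qed
  have sepX: "separable_wrt (X s) (nX s)" for s
  proof -
    obtain D where D: "D \<subseteq> G ` X s" "countable D" "dense_wrt (G ` X s) (n\<Theta> s) D"
      using sep_sub[OF ns Fc(1), of "G ` X s" s] XG by auto
    define pk where "pk = (\<lambda>d. SOME f. f \<in> X s \<and> G f = d)"
    have Ed: "pk d \<in> X s \<and> G (pk d) = d" if "d \<in> D" for d
      unfolding pk_def by (rule someI_ex) (use D(1) that in auto)
    show ?thesis unfolding separable_wrt_def
    proof (intro exI conjI)
      show "pk ` D \<subseteq> X s" using Ed by auto
      show "countable (pk ` D)" using D(2) by simp
      show "dense_wrt (X s) (nX s) (pk ` D)" unfolding dense_wrt_def
      proof (intro ballI allI impI)
        fix x e assume x: "x \<in> X s" and e: "(0::real) < e"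
        then obtain d where d: "d \<in> D" "n\<Theta> s (G x - d) < e" using D(3) unfolding dense_wrt_def by blast
        have "nX s (x - pk d) \<le> n\<Theta> s (G x - d)" using nXle[of s "x - pk d"] Ed[OF d(1)] by (simp add: Gdiff)
        thus "\<exists>t\<in>pk ` D. nX s (x - t) < e" using d by force
      qed
    qed
  qed
  have ntX: "(\<Inter>s. X s) \<noteq> {0}"
  proof -
    have r: "range G \<inter> \<Theta> 0 \<noteq> {0}" using spec[OF nontriv, of 0] unfolding G_def .
    have "\<exists>f0. G f0 \<noteq> 0"
    proof (rule ccontr)
      assume "\<not> (\<exists>f0. G f0 \<noteq> 0)"
      hence "\<forall>f. G f = 0" by blast
      hence "range G \<inter> \<Theta> 0 = {0}" using fr[of 0] G0 by auto
      with r show False by blast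
    qed
    then obtain f0 where f0: "G f0 \<noteq> 0" by blast
    have p: "0 < n\<Theta> 0 (G f0)" using ns[of 0] f0 fr[of f0] unfolding normed_subspace_def
      by (metis less_eq_real_def)
    obtain d where d: "d \<in> range G \<inter> (\<Inter>t. \<Theta> t)" "n\<Theta> 0 (G f0 - d) < n\<Theta> 0 (G f0)"
      using dense p fr[of f0] unfolding dense_wrt_def G_def by blast
    then obtain f where f: "d = G f" by blast
    have "f \<noteq> 0" using d f G0 by auto
    moreover have "f \<in> (\<Inter>s. X s)" using XF d f by auto
    ultimately show ?thesis by blast
  qed
  have denseX: "dense_wrt (X s) (nX s) (\<Inter>s. X s)" for s
    unfolding dense_wrt_def
  proof (intro ballI allI impI)
    fix x e assume x: "x \<in> X s" and e: "(0::real) < e"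
    have "G x \<in> range G \<inter> \<Theta> s" using x XG by auto
    then obtain d where d: "d \<in> range G \<inter> (\<Inter>t. \<Theta> t)" "n\<Theta> s (G x - d) < e"
      using dense e unfolding dense_wrt_def G_def by blast
    then obtain f where f: "d = G f" by blast
    have "nX s (x - f) < e" using nXle[of s "x - f"] d f by (simp add: Gdiff)
    thus "\<exists>d\<in>\<Inter>s. X s. nX s (x - d) < e" using XF d f by auto
  qed
  have monoX: "nX s x \<le> nX (Suc s) x" if "x \<in> X (Suc s)" for s x
  proof (cases "s = 0")
    case True
    have "G x \<in> \<Theta> (Suc 0)" using that XG[of x "Suc s"] True by simp
    hence "n\<Theta> 0 (G x) \<le> n\<Theta> (Suc 0) (G x)" by (rule Fc(3))
    thus ?thesis using True nrm_le[of x] by (simp add: nX_def)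
  next
    case False
    thus ?thesis using that XG Fc(3)[where s=s] unfolding nX_def by auto
  qed
  have FX: "F_conditions X nX"
  proof -
    have sub: "X (Suc s) \<subseteq> X s" for s
    proof
      fix x assume "x \<in> X (Suc s)"
      hence "G x \<in> \<Theta> (Suc s)" by (simp add: XG)
      hence "G x \<in> \<Theta> s" using Fc(2)[of s] by blast
      thus "x \<in> X s" by (simp add: XG)
    qed
    have a1: "\<forall>s. (normed_subspace (X s) (nX s) \<and> complete_wrt (X s) (nX s)) \<and> separable_wrt (X s) (nX s)"
      using nsX cwX sepX by simp
    have a4: "\<forall>s. \<forall>x\<in>X (Suc s). nX s x \<le> nX (Suc s) x" using monoX by simp
    show ?thesis unfolding F_conditions_def banach_space_on_def
      by (rule conjI[OF a1 conjI[OF ntX conjI[OF allI[OF sub] conjI[OF a4 allI[OF denseX]]]]])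
  qed
  have preF: "pre_F_frame X nX \<Theta> n\<Theta> g (\<lambda>s. if s = 0 then A0 else 1) (\<lambda>s. if s = 0 then B0 else 1)"
    unfolding pre_F_frame_def
  proof (intro conjI allI)
    fix i
    obtain K where K: "\<And>x. norm (g i x) \<le> norm x * K" using bounded_linear.bounded[OF bl[of i]] by blast
    show "F_dual X nX (g i)" unfolding F_dual_def linear_on_def
    proof (intro conjI exI ballI allI)
      show "\<And>x y. g i (x + y) = g i x + g i y" by (simp add: linear_add[OF bl[THEN bounded_linear.linear]])
      show "\<And>c x. g i (c *\<^sub>R x) = c *\<^sub>R g i x" by (simp add: linear_scale[OF bl[THEN bounded_linear.linear]])
      fix f show "\<bar>g i f\<bar> \<le> K * nX 0 f" using K[of f] by (simp add: nX_def mult.commute)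
    qed
  next
    show "\<forall>f\<in>(\<Inter>s. X s). (\<lambda>i. g i f) \<in> (\<Inter>s. \<Theta> s)" using XF unfolding G_def by blast
  next
    fix s :: nat
    show "0 < (if s = 0 then A0 else 1)" "(if s = 0 then A0 else 1) \<le> (if s = 0 then B0 else (1::real))"
      using bounds by auto
    show "\<forall>f\<in>\<Inter>t. X t. (if s = 0 then A0 else 1) * nX s f \<le> n\<Theta> s (\<lambda>i. g i f) \<and>
            n\<Theta> s (\<lambda>i. g i f) \<le> (if s = 0 then B0 else 1) * nX s f"
    proof
      fix f
      show "(if s = 0 then A0 else 1) * nX s f \<le> n\<Theta> s (\<lambda>i. g i f) \<and>
            n\<Theta> s (\<lambda>i. g i f) \<le> (if s = 0 then B0 else 1) * nX s f"
      proof (cases "s = 0")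
        case True thus ?thesis using fr[of f] by (simp add: nX_def G_def)
      next
        case False thus ?thesis by (simp add: nX_def G_def)
      qed
    qed
  qed
  have Ff: "(\<exists>P. linear_on (\<Inter>s. \<Theta> s) P \<and>
                 P ` (\<Inter>s. \<Theta> s) = range G \<inter> (\<Inter>t. \<Theta> t) \<and>
                 (\<forall>c\<in>(\<Inter>s. \<Theta> s). P (P c) = P c) \<and>
                 F_bounded \<Theta> n\<Theta> n\<Theta> P) \<longrightarrow> F_frame X nX \<Theta> n\<Theta> g"
  proof
    assume hP: "\<exists>P. linear_on (\<Inter>s. \<Theta> s) P \<and>
                 P ` (\<Inter>s. \<Theta> s) = range G \<inter> (\<Inter>t. \<Theta> t) \<and>
                 (\<forall>c\<in>(\<Inter>s. \<Theta> s). P (P c) = P c) \<and>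
                 F_bounded \<Theta> n\<Theta> n\<Theta> P"
    obtain P where P: "linear_on (\<Inter>s. \<Theta> s) P" "P ` (\<Inter>s. \<Theta> s) = range G \<inter> (\<Inter>t. \<Theta> t)"
      "\<forall>c\<in>(\<Inter>s. \<Theta> s). P (P c) = P c" "F_bounded \<Theta> n\<Theta> n\<Theta> P" using hP by blast
    define V where "V = (\<lambda>c. SOME f. G f = P c)"
    have GV: "G (V c) = P c \<and> P c \<in> (\<Inter>t. \<Theta> t)" if "c \<in> (\<Inter>s. \<Theta> s)" for c
    proof -
      have "P c \<in> P ` (\<Inter>s. \<Theta> s)" using that by (rule imageI)
      hence "P c \<in> range G \<inter> (\<Inter>t. \<Theta> t)" unfolding P(2) .
      hence m: "P c \<in> (\<Inter>t. \<Theta> t)" "P c \<in> range G" by (rule IntD2, rule IntD1)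
      from m(2) obtain f where f: "P c = G f" by (rule rangeE)
      have "G (SOME f. G f = P c) = P c" by (rule someI[of "\<lambda>f. G f = P c" f]) (rule f[symmetric])
      hence "G (V c) = P c" unfolding V_def .
      thus ?thesis using m(1) by (rule conjI)
    qed
    have cl: "x + y \<in> (\<Inter>s. \<Theta> s)" "a *\<^sub>R x \<in> (\<Inter>s. \<Theta> s)" if "x \<in> (\<Inter>s. \<Theta> s)" "y \<in> (\<Inter>s. \<Theta> s)" for x y a
      using that by (simp_all add: ns_add[OF ns] ns_scale[OF ns])
    show "F_frame X nX \<Theta> n\<Theta> g" unfolding F_frame_def
    proof (intro conjI exI)
      show "pre_F_frame X nX \<Theta> n\<Theta> g (\<lambda>s. if s = 0 then A0 else 1) (\<lambda>s. if s = 0 then B0 else 1)" by (rule preF)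
      show "\<forall>c\<in>\<Inter>s. \<Theta> s. V c \<in> (\<Inter>s. X s)"
      proof
        fix c assume "c \<in> (\<Inter>s. \<Theta> s)"
        hence "G (V c) \<in> (\<Inter>s. \<Theta> s)" using GV by simp
        thus "V c \<in> (\<Inter>s. X s)" using XF[of "V c"] by simp
      qed
      show "linear_on (\<Inter>s. \<Theta> s) V" unfolding linear_on_def
      proof (intro conjI ballI allI)
        fix x y assume x: "x \<in> (\<Inter>s. \<Theta> s)" and y: "y \<in> (\<Inter>s. \<Theta> s)"
        have "P (x + y) = P x + P y" using P(1) x y unfolding linear_on_def by blast
        hence "G (V (x + y)) = G (V x + V y)" using GV[OF x] GV[OF y] GV[OF cl(1)[OF x y]]
          by (simp add: Gadd)
        thus "V (x + y) = V x + V y" by (rule Ginj)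
      next
        fix a x assume x: "x \<in> (\<Inter>s. \<Theta> s)"
        have "P (a *\<^sub>R x) = a *\<^sub>R P x" using P(1) x unfolding linear_on_def by blast
        hence "G (V (a *\<^sub>R x)) = G (a *\<^sub>R V x)" using GV[OF x] GV[OF cl(2)[OF x x]]
          by (simp add: Gscale)
        thus "V (a *\<^sub>R x) = a *\<^sub>R V x" by (rule Ginj)
      qed
      show "F_bounded \<Theta> n\<Theta> nX V" unfolding F_bounded_def
      proof
        fix s
        obtain K where K: "\<forall>c\<in>(\<Inter>t. \<Theta> t). n\<Theta> s (P c) \<le> K * n\<Theta> s c" using P(4) unfolding F_bounded_def by blast
        show "\<exists>K. \<forall>c\<in>\<Inter>t. \<Theta> t. nX s (V c) \<le> K * n\<Theta> s c"
        proof (intro exI ballI)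
          fix c assume c: "c \<in> (\<Inter>t. \<Theta> t)"
          have "nX s (V c) \<le> n\<Theta> s (P c)" using nXle[of s "V c"] GV[OF c] by simp
          also have "\<dots> \<le> K * n\<Theta> s c" using K c by blast
          finally show "nX s (V c) \<le> K * n\<Theta> s c" .
        qed
      qed
      show "\<forall>f\<in>\<Inter>s. X s. V (\<lambda>i. g i f) = f"
      proof
        fix f assume f: "f \<in> (\<Inter>s. X s)"
        hence Gf: "G f \<in> (\<Inter>s. \<Theta> s)" using XF by blast
        hence "G f \<in> P ` (\<Inter>s. \<Theta> s)" unfolding P(2) by simp
        then obtain c where c: "c \<in> (\<Inter>s. \<Theta> s)" "G f = P c" by (auto simp del: INT_iff)
        have "P (G f) = G f" using c P(3) by simp
        hence "G (V (G f)) = G f" using GV[OF Gf] by simp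
        hence "V (G f) = f" by (rule Ginj)
        thus "V (\<lambda>i. g i f) = f" by (simp add: G_def)
      qed
    qed
  qed
  have Gf: "\<And>f. (\<lambda>i. g i f) = G f" by (simp add: G_def)
  show ?thesis unfolding Gf
  proof (intro exI conjI impI allI)
    show "X 0 = UNIV" "nX 0 = norm" by (simp_all add: X_def nX_def)
    fix s :: nat assume "s \<ge> 1"
    thus "X s = {f. G f \<in> \<Theta> s}" "\<forall>f\<in>X s. nX s f = n\<Theta> s (G f)" by (auto simp: X_def nX_def)
  qed (use FX preF Ff in \<open>simp_all add: G_def\<close>)
qed

end
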